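(* Let $n,d,c\in\mathbb{N}$ with $d\ge 50$ and $c\in[d]$, let $\mathcal{F}\subseteq 2^{[n]}$ be a hereditary family with $\delta(\mathcal{F})\ge 2^{d-1}-c+1$, and let $P$ be an isolated pile of $\mathcal{F}$. If $\sum_{x\in P}\omega_{\mathcal{F}}(x)<2^d-c$, then: (1) $P$ contains at most $7$ good vertices; (2) $t\le d+4$; (3) every $N\in\mathcal{N}$ satisfies $|N|\le 3$; (4) for every bad vertex $x\in P$, $\{x\}\in\mathcal{N}$.
   Context: A family is hereditary if it is closed under taking subsets. $d_{\mathcal{F}}(x)=|\{F\in\mathcal{F}:x\in F\}|$, $\delta(\mathcal{F})=\min_x d_{\mathcal{F}}(x)$, $N(x)=\bigcup_{x\in F\in\mathcal{F}}F$. The weight of $x$ is $\omega_{\mathcal{F}}(x)=\sum_{x\in F\in\mathcal{F}}\frac{1}{|F|}$. A vertex $x$ is good if $|N(x)|\ge d+1$ and bad if $|N(x)|=d$. A set $P\subseteq[n]$ with $|P|=d$ is a pile of $\mathcal{F}$ if $P\subseteq N(y)$ for every $y\in P$, and there exists $z\in P$ with $N(z)=P$; a pile is isolated if it is disjoint from every other pile. Given the pile $P$, let $\mathcal{G}=\{S\subseteq P: S\in\mathcal{F}\}$, $t=2^d-|\mathcal{G}|$, $\mathcal{M}=2^{P}\setminus\mathcal{G}$, and $\mathcal{N}=\{P\setminus M: M\in\mathcal{M}\}$ (so $|\mathcal{N}|=t$ and $\mathcal{N}$ is hereditary). *)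

theory Defs
  imports "HOL-Analysis.Analysis"
begin

definition hereditary :: "nat set set \<Rightarrow> bool" where
  "hereditary F \<longleftrightarrow> (\<forall>A\<in>F. \<forall>B. B \<subseteq> A \<longrightarrow> B \<in> F)"

definition deg :: "nat set set \<Rightarrow> nat \<Rightarrow> nat" where
  "deg F x = card {A\<in>F. x \<in> A}"

definition min_deg :: "nat \<Rightarrow> nat set set \<Rightarrow> nat" where
  "min_deg n F = Min ((deg F) ` {1..n})"

definition nbhd :: "nat set set \<Rightarrow> nat \<Rightarrow> nat set" where
  "nbhd F x = \<Union> {A\<in>F. x \<in> A}"

definition weight :: "nat set set \<Rightarrow> nat \<Rightarrow> real" where
  "weight F x = (\<Sum>A\<in>{A\<in>F. x \<in> A}. 1 / real (card A))"

definition good :: "nat set set \<Rightarrow> nat \<Rightarrow> nat \<Rightarrow> bool" where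
  "good F d x \<longleftrightarrow> card (nbhd F x) \<ge> d + 1"

definition bad :: "nat set set \<Rightarrow> nat \<Rightarrow> nat \<Rightarrow> bool" where
  "bad F d x \<longleftrightarrow> card (nbhd F x) = d"

definition is_pile :: "nat \<Rightarrow> nat set set \<Rightarrow> nat \<Rightarrow> nat set \<Rightarrow> bool" where
  "is_pile n F d P \<longleftrightarrow> P \<subseteq> {1..n} \<and> card P = d \<and>
     (\<forall>y\<in>P. P \<subseteq> nbhd F y) \<and> (\<exists>z\<in>P. nbhd F z = P)"

definition isolated_pile :: "nat \<Rightarrow> nat set set \<Rightarrow> nat \<Rightarrow> nat set \<Rightarrow> bool" where
  "isolated_pile n F d P \<longleftrightarrow> is_pile n F d P \<and>
     (\<forall>Q. is_pile n F d Q \<and> Q \<noteq> P \<longrightarrow> P \<inter> Q = {})"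

definition pileG :: "nat set set \<Rightarrow> nat set \<Rightarrow> nat set set" where
  "pileG F P = {S. S \<subseteq> P \<and> S \<in> F}"

definition pileM :: "nat set set \<Rightarrow> nat set \<Rightarrow> nat set set" where
  "pileM F P = Pow P - pileG F P"

definition pileN :: "nat set set \<Rightarrow> nat set \<Rightarrow> nat set set" where
  "pileN F P = (\<lambda>M. P - M) ` pileM F P"

definition pile_t :: "nat set set \<Rightarrow> nat \<Rightarrow> nat set \<Rightarrow> nat" where
  "pile_t F d P = 2 ^ d - card (pileG F P)"

end

theory Submission imports Defs begin

lemma pow2_12: "7 \<le> L \<Longrightarrow> 12 * L \<le> (2::nat)^L"
proof (induction L rule: nat_induct_at_least)
  case base then show ?case by simp
next
  case (Suc k) then show ?case by simp
qed

lemma pow2_sq: "13 \<le> K \<Longrightarrow> 4*K*K \<le> (2::nat)^(K-2)"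
proof (induction K rule: nat_induct_at_least)
  case base then show ?case by simp
next
  case (Suc k)
  have "13*k \<le> k*k" using Suc.hyps by simp
  moreover have "4 * Suc k * Suc k = 4*(k*k) + 8*k + 4" by (simp add: algebra_simps)
  ultimately have "4 * Suc k * Suc k \<le> 2 * (4*k*k)" using Suc.hyps by linarith
  also have "\<dots> \<le> 2 * 2^(k-2)" using Suc.IH by simp
  also have "\<dots> = 2^(Suc k - 2)" using Suc.hyps by (simp add: Suc_diff_le power_Suc[symmetric] del: power_Suc)
  finally show ?case .
qed

lemma numL: assumes "50 \<le> d" "2^L \<le> tt" "tt < 2*d" shows "6*L \<le> (d::nat)"
proof (rule ccontr)
  assume "\<not> ?thesis"
  then have "L \<ge> 9" using assms by linarith
  then have "12*L \<le> 2^L" using pow2_12 by simp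
  with assms \<open>\<not> ?thesis\<close> show False by linarith
qed

lemma numK: assumes "50 \<le> d" "2 \<le> K" "2^(K-2) < K*(d::nat)" shows "4*K \<le> d"
proof (rule ccontr)
  assume h: "\<not> 4*K \<le> d"
  then have "K \<ge> 13" using assms by linarith
  then have "4*K*K \<le> 2^(K-2)" using pow2_sq by simp
  moreover have "K*d \<le> K*(4*K)" using h by simp
  ultimately show False using assms by linarith
qed

lemma dcount:
  assumes "finite P" "finite \<A>"
  shows "(\<Sum>x\<in>P. card {A\<in>\<A>. x\<in>A}) = (\<Sum>A\<in>\<A>. card (A \<inter> P))"
proof -
  have "(\<Sum>x\<in>P. card {A\<in>\<A>. x\<in>A}) = (\<Sum>x\<in>P. \<Sum>A\<in>\<A>. if x\<in>A then 1 else 0)"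
    using assms by (simp add: sum.inter_filter[symmetric])
  also have "\<dots> = (\<Sum>A\<in>\<A>. \<Sum>x\<in>P. if x\<in>A then 1 else 0)" by (rule sum.swap)
  also have "\<dots> = (\<Sum>A\<in>\<A>. card (A \<inter> P))"
    using assms by (simp add: sum.inter_filter[symmetric] Int_def conj_commute)
  finally show ?thesis .
qed

lemma card_with:
  assumes "finite P" "x \<in> P"
  shows "card {A. A \<subseteq> P \<and> x \<in> A} = 2^(card P - 1)"
proof -
  have eq: "{A. A \<subseteq> P \<and> x \<in> A} = insert x ` Pow (P - {x})"
  proof
    show "{A. A \<subseteq> P \<and> x \<in> A} \<subseteq> insert x ` Pow (P - {x})"
    proof
      fix A assume "A \<in> {A. A \<subseteq> P \<and> x \<in> A}"
      then have "A = insert x (A - {x})" "A - {x} \<in> Pow (P - {x})" by auto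
      then show "A \<in> insert x ` Pow (P - {x})" by blast
    qed
  qed (use assms in auto)
  have inj: "inj_on (insert x) (Pow (P - {x}))"
  proof (rule inj_onI)
    fix A B assume "A \<in> Pow (P - {x})" "B \<in> Pow (P - {x})" "insert x A = insert x B"
    then show "A = B" using insert_ident[of x A B] by auto
  qed
  have "card {A. A \<subseteq> P \<and> x \<in> A} = card (Pow (P - {x}))"
    unfolding eq using inj by (rule card_image)
  also have "\<dots> = 2^(card P - 1)" using assms by (simp add: card_Pow)
  finally show ?thesis .
qed

locale PL =
  fixes n d c :: nat and F :: "nat set set" and P :: "nat set"
  assumes d50: "d \<ge> 50" and c1: "1 \<le> c" and cd: "c \<le> d"
    and Fsub: "F \<subseteq> Pow {1..n}" and her: "hereditary F"
    and mindeg: "int (min_deg n F) \<ge> 2 ^ (d - 1) - int c + 1"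
    and pile: "is_pile n F d P"
    and wt: "(\<Sum>x\<in>P. weight F x) < 2 ^ d - real c"
begin

definition "Gs = pileG F P"
definition "Ms = pileM F P"
definition "Ns = pileN F P"
definition "tt = card Ms"
definition "Out = {A\<in>F. A \<inter> P \<noteq> {} \<and> \<not> A \<subseteq> P}"
definition "ee x = card {A\<in>Out. x\<in>A}"
definition "mm x = card {B\<in>Ms. x\<in>B}"
definition "SS = (\<Sum>A\<in>Out. real (card (A \<inter> P)) / real (card A))"

lemma finF: "finite F"
proof -
  have "finite (Pow {1..n})" by simp
  then show ?thesis using finite_subset[OF Fsub] by blast
qed

lemma finA: "A \<in> F \<Longrightarrow> finite A"
  using Fsub by (auto intro: finite_subset)

lemma Psub: "P \<subseteq> {1..n}" and cardP: "card P = d"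
  using pile unfolding is_pile_def by auto

lemma finP: "finite P" using Psub finite_subset by blast

lemma P_nbhd: "y \<in> P \<Longrightarrow> P \<subseteq> nbhd F y"
  using pile unfolding is_pile_def by auto

lemma z_ex: "\<exists>z\<in>P. nbhd F z = P"
  using pile unfolding is_pile_def by auto

lemma her_sub: "A \<in> F \<Longrightarrow> B \<subseteq> A \<Longrightarrow> B \<in> F"
  using her unfolding hereditary_def by blast

lemma Pne: "P \<noteq> {}" using cardP d50 by auto

lemma emp: "{} \<in> F"
proof -
  obtain z where "z \<in> P" "nbhd F z = P" using z_ex by blast
  then have "\<Union>{A\<in>F. z\<in>A} \<noteq> {}" using Pne unfolding nbhd_def by simp
  then obtain A where "A \<in> F" by blast
  then show ?thesis using her_sub by blast
qed

lemma fin_nbhd: "finite (nbhd F x)"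
proof -
  have "nbhd F x \<subseteq> {1..n}" using Fsub unfolding nbhd_def by auto
  then show ?thesis using finite_subset by (metis finite_atLeastAtMost)
qed

lemma deg_ge: "x \<in> P \<Longrightarrow> int (deg F x) \<ge> 2^(d-1) - int c + 1"
proof -
  assume "x \<in> P"
  then have "x \<in> {1..n}" using Psub by auto
  then have "min_deg n F \<le> deg F x" unfolding min_deg_def by (intro Min_le) auto
  then show ?thesis using mindeg by linarith
qed

lemma Gs_sub: "Gs \<subseteq> Pow P" unfolding Gs_def pileG_def by auto
lemma Ms_eq: "Ms = Pow P - Gs" unfolding Ms_def pileM_def Gs_def by simp
lemma finGs: "finite Gs" using Gs_sub finP by (meson finite_Pow_iff finite_subset)
lemma finMs: "finite Ms" using Ms_eq finP by simp

lemma card_GM: "card Gs + card Ms = 2^d"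
proof -
  have "Pow P = Gs \<union> Ms" "Gs \<inter> Ms = {}" using Ms_eq Gs_sub by auto
  then have "card (Pow P) = card Gs + card Ms" using card_Un_disjoint[OF finGs finMs] by simp
  then show ?thesis using card_Pow[OF finP] cardP by simp
qed

lemma pile_t_eq: "pile_t F d P = tt"
  using card_GM unfolding pile_t_def tt_def Gs_def by simp

lemma Ms_up: "B \<in> Ms \<Longrightarrow> B \<subseteq> B' \<Longrightarrow> B' \<subseteq> P \<Longrightarrow> B' \<in> Ms"
  unfolding Ms_eq Gs_def pileG_def using her_sub by auto

lemma Ns_alt: "Ns = (\<lambda>B. P - B) ` Ms" unfolding Ns_def pileN_def Ms_def by simp

lemma inj_compl: "inj_on (\<lambda>B. P - B) (Pow P)"
  by (rule inj_onI) auto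

lemma card_Ns: "card Ns = tt"
  unfolding Ns_alt tt_def using Ms_eq inj_compl
  by (intro card_image) (auto intro: inj_on_subset)

lemma Ns_sub: "Ns \<subseteq> Pow P" unfolding Ns_alt by auto
lemma finNs: "finite Ns" using Ns_alt finMs by simp

lemma Ns_mem: "N' \<subseteq> P \<Longrightarrow> N' \<in> Ns \<longleftrightarrow> P - N' \<in> Ms"
proof
  assume "N' \<subseteq> P" "N' \<in> Ns"
  then obtain B where "B \<in> Ms" "N' = P - B" unfolding Ns_alt by auto
  moreover have "B \<subseteq> P" using \<open>B \<in> Ms\<close> Ms_eq by auto
  ultimately show "P - N' \<in> Ms" by (simp add: double_diff)
next
  assume "N' \<subseteq> P" "P - N' \<in> Ms"
  moreover have "N' = P - (P - N')" using \<open>N' \<subseteq> P\<close> by auto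
  ultimately show "N' \<in> Ns" unfolding Ns_alt by blast
qed

lemma Ns_down: "N' \<in> Ns \<Longrightarrow> N'' \<subseteq> N' \<Longrightarrow> N'' \<in> Ns"
proof -
  assume a: "N' \<in> Ns" "N'' \<subseteq> N'"
  then have "N' \<subseteq> P" using Ns_sub by auto
  then have "P - N' \<in> Ms" using a(1) Ns_mem[OF \<open>N' \<subseteq> P\<close>] by simp
  moreover have "P - N' \<subseteq> P - N''" "P - N'' \<subseteq> P" using a(2) by auto
  ultimately have "P - N'' \<in> Ms" using Ms_up by blast
  moreover have "N'' \<subseteq> P" using a \<open>N' \<subseteq> P\<close> by auto
  ultimately show ?thesis using Ns_mem[of N''] by simp
qed

lemma emp_Gs: "{} \<in> Gs" using emp unfolding Gs_def pileG_def by simp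

lemma weight_sum: "(\<Sum>x\<in>P. weight F x) = real (card Gs) - 1 + SS"
proof -
  define h where "h A = real (card (A \<inter> P)) / real (card A)" for A
  have "(\<Sum>x\<in>P. weight F x) = (\<Sum>x\<in>P. \<Sum>A\<in>F. if x\<in>A then 1 / real (card A) else 0)"
    unfolding weight_def using finF by (simp add: sum.inter_filter)
  also have "\<dots> = (\<Sum>A\<in>F. \<Sum>x\<in>P. if x\<in>A then 1 / real (card A) else 0)" by (rule sum.swap)
  also have "\<dots> = (\<Sum>A\<in>F. h A)"
  proof (rule sum.cong[OF refl])
    fix A assume "A \<in> F"
    have "(\<Sum>x\<in>P. if x\<in>A then 1 / real (card A) else 0) = (\<Sum>x\<in>{x\<in>P. x\<in>A}. 1 / real (card A))"
      using finP sum.inter_filter[of P "\<lambda>_. 1 / real (card A)" "\<lambda>x. x\<in>A"] by simp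
    also have "{x\<in>P. x\<in>A} = A \<inter> P" by blast
    also have "(\<Sum>x\<in>A \<inter> P. 1 / real (card A)) = h A" unfolding h_def by simp
    finally show "(\<Sum>x\<in>P. if x\<in>A then 1 / real (card A) else 0) = h A" .
  qed
  also have "\<dots> = (\<Sum>A\<in>F. (if A \<subseteq> P \<and> A \<noteq> {} then 1 else 0) + (if A \<inter> P \<noteq> {} \<and> \<not> A \<subseteq> P then h A else 0))"
  proof (rule sum.cong[OF refl])
    fix A assume "A \<in> F"
    then have "finite A" by (rule finA)
    show "h A = (if A \<subseteq> P \<and> A \<noteq> {} then 1 else 0) + (if A \<inter> P \<noteq> {} \<and> \<not> A \<subseteq> P then h A else 0)"
    proof (cases "A \<subseteq> P")
      case True
      then have "A \<inter> P = A" by auto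
      then show ?thesis using True \<open>finite A\<close> unfolding h_def by auto
    next
      case False
      then show ?thesis unfolding h_def by auto
    qed
  qed
  also have "\<dots> = (\<Sum>A\<in>F. (if A \<subseteq> P \<and> A \<noteq> {} then 1 else 0)) + (\<Sum>A\<in>F. if A \<inter> P \<noteq> {} \<and> \<not> A \<subseteq> P then h A else 0)"
    by (rule sum.distrib)
  also have "(\<Sum>A\<in>F. if A \<inter> P \<noteq> {} \<and> \<not> A \<subseteq> P then h A else 0) = SS"
    unfolding SS_def Out_def h_def using finF by (simp add: sum.inter_filter)
  also have "(\<Sum>A\<in>F. (if A \<subseteq> P \<and> A \<noteq> {} then 1 else 0)) = real (card {A\<in>F. A \<subseteq> P \<and> A \<noteq> {}})"
    using finF by (simp add: sum.inter_filter[symmetric])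
  also have "{A\<in>F. A \<subseteq> P \<and> A \<noteq> {}} = Gs - {{}}" unfolding Gs_def pileG_def by auto
  also have "card (Gs - {{}}) = card Gs - 1" using emp_Gs finGs by simp
  also have "real (card Gs - 1) = real (card Gs) - 1" proof -
    have "card Gs \<noteq> 0" using emp_Gs finGs by auto
    then have "card Gs \<ge> 1" by simp
    then show ?thesis by simp
  qed
  finally show ?thesis .
qed

lemma SS_nonneg: "SS \<ge> 0" unfolding SS_def by (intro sum_nonneg) auto

lemma SS_bound: "SS < real tt + 1 - real c"
proof -
  have "card Gs + tt = 2^d" using card_GM unfolding tt_def .
  then have "real (card Gs + tt) = real ((2::nat)^d)" by (simp only:)
  then have "real (card Gs) + real tt = 2^d" by simp
  then have "real (card Gs) = 2^d - real tt" by simp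
  then show ?thesis using wt weight_sum by simp
qed

lemma tt_ge: "c \<le> tt" using SS_bound SS_nonneg by simp

lemma deg_split: "x \<in> P \<Longrightarrow> deg F x = card {A\<in>Gs. x\<in>A} + ee x"
proof -
  assume x: "x \<in> P"
  have eq: "{A\<in>F. x\<in>A} = {A\<in>Gs. x\<in>A} \<union> {A\<in>Out. x\<in>A}"
    using x unfolding Gs_def pileG_def Out_def by auto
  have "finite {A\<in>Gs. x\<in>A}" "finite {A\<in>Out. x\<in>A}"
    using finGs finF unfolding Out_def by auto
  moreover have "{A\<in>Gs. x\<in>A} \<inter> {A\<in>Out. x\<in>A} = {}"
    unfolding Gs_def pileG_def Out_def by auto
  ultimately show ?thesis unfolding deg_def ee_def eq by (simp add: card_Un_disjoint)
qed

lemma GM_split: "x \<in> P \<Longrightarrow> card {A\<in>Gs. x\<in>A} + mm x = 2^(d-1)"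
proof -
  assume x: "x \<in> P"
  have eq: "{A. A \<subseteq> P \<and> x \<in> A} = {A\<in>Gs. x\<in>A} \<union> {B\<in>Ms. x\<in>B}"
    using Ms_eq Gs_sub by auto
  have "finite {A\<in>Gs. x\<in>A}" "finite {A\<in>Ms. x\<in>A}"
    using finGs finMs by auto
  moreover have "{A\<in>Gs. x\<in>A} \<inter> {A\<in>Ms. x\<in>A} = {}"
    using Ms_eq by auto
  ultimately have "card {A. A \<subseteq> P \<and> x \<in> A} = card {A\<in>Gs. x\<in>A} + mm x"
    unfolding mm_def eq by (simp add: card_Un_disjoint)
  then show ?thesis using card_with[OF finP x] cardP by simp
qed

lemma mm_ee: "x \<in> P \<Longrightarrow> mm x + 1 \<le> c + ee x"
proof -
  assume x: "x \<in> P"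
  have h: "deg F x + mm x = 2^(d-1) + ee x"
    using deg_split[OF x] GM_split[OF x] by linarith
  have "int (deg F x + mm x) = int (2^(d-1) + ee x)" by (simp only: h)
  then have "int (deg F x) + int (mm x) = 2^(d-1) + int (ee x)" by simp
  then show ?thesis using deg_ge[OF x] by linarith
qed

lemma nbhd_ge: "x \<in> P \<Longrightarrow> d \<le> card (nbhd F x)"
  using card_mono[OF fin_nbhd P_nbhd] cardP by auto

lemma bad_or_good: "x \<in> P \<Longrightarrow> bad F d x \<or> good F d x"
proof -
  assume "x \<in> P"
  then have "d \<le> card (nbhd F x)" by (rule nbhd_ge)
  then show ?thesis unfolding bad_def good_def by linarith
qed

lemma bad_good: "bad F d x \<Longrightarrow> \<not> good F d x"
  unfolding bad_def good_def by simp

lemma bad_nbhd: "x \<in> P \<Longrightarrow> bad F d x \<Longrightarrow> nbhd F x = P"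
proof -
  assume x: "x \<in> P" "bad F d x"
  show ?thesis using card_subset_eq[OF fin_nbhd P_nbhd[OF x(1)]] x(2) cardP unfolding bad_def by simp
qed

lemma bad_ee: "x \<in> P \<Longrightarrow> bad F d x \<Longrightarrow> ee x = 0"
proof -
  assume x: "x \<in> P" "bad F d x"
  have "{A\<in>Out. x\<in>A} = {}"
  proof (rule ccontr)
    assume "{A\<in>Out. x\<in>A} \<noteq> {}"
    then obtain A where "A \<in> F" "x \<in> A" "\<not> A \<subseteq> P" unfolding Out_def by auto
    then have "A \<subseteq> nbhd F x" unfolding nbhd_def by auto
    then show False using bad_nbhd[OF x] \<open>\<not> A \<subseteq> P\<close> by simp
  qed
  then have "card {A\<in>Out. x\<in>A} = card ({}::nat set set)" by (simp only:)
  then show ?thesis unfolding ee_def by simp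
qed

lemma good_pair: "x \<in> P \<Longrightarrow> good F d x \<Longrightarrow> \<exists>y. y \<notin> P \<and> {x,y} \<in> F"
proof -
  assume x: "x \<in> P" "good F d x"
  have "\<not> nbhd F x \<subseteq> P"
  proof
    assume "nbhd F x \<subseteq> P"
    then have "card (nbhd F x) \<le> d" using card_mono[OF finP \<open>nbhd F x \<subseteq> P\<close>] cardP by simp
    then show False using x unfolding good_def by simp
  qed
  then obtain y A where "y \<notin> P" "y \<in> A" "A \<in> F" "x \<in> A" unfolding nbhd_def by auto
  then have "{x,y} \<in> F" using her_sub by auto
  then show ?thesis using \<open>y \<notin> P\<close> by blast
qed

lemma tt_le: "tt + 2 \<le> 2*c"
proof -
  obtain z where z: "z \<in> P" "nbhd F z = P" using z_ex by blast
  then have "bad F d z" unfolding bad_def using cardP by simp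
  then have "mm z + 1 \<le> c" using mm_ee[OF z(1)] bad_ee[OF z(1)] by simp
  have "insert z ` {B\<in>Ms. z \<notin> B} \<subseteq> {B\<in>Ms. z\<in>B}"
  proof
    fix B' assume "B' \<in> insert z ` {B\<in>Ms. z \<notin> B}"
    then obtain B where B: "B \<in> Ms" "B' = insert z B" by auto
    then have "B \<subseteq> P" using Ms_eq by auto
    then have "B' \<in> Ms" using Ms_up[OF B(1), of "insert z B"] B(2) z(1) by auto
    then show "B' \<in> {B\<in>Ms. z\<in>B}" using B by simp
  qed
  moreover have "inj_on (insert z) {B\<in>Ms. z \<notin> B}"
  proof (rule inj_onI)
    fix A B assume "A \<in> {B\<in>Ms. z \<notin> B}" "B \<in> {B\<in>Ms. z \<notin> B}" "insert z A = insert z B"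
    then show "A = B" using insert_ident[of z A B] by auto
  qed
  ultimately have "card {B\<in>Ms. z \<notin> B} \<le> mm z"
  proof -
    assume sub: "insert z ` {B\<in>Ms. z \<notin> B} \<subseteq> {B\<in>Ms. z\<in>B}" and inj: "inj_on (insert z) {B\<in>Ms. z \<notin> B}"
    have "card {B\<in>Ms. z \<notin> B} = card (insert z ` {B\<in>Ms. z \<notin> B})" using card_image[OF inj] by simp
    also have "\<dots> \<le> card {B\<in>Ms. z\<in>B}" using finMs by (intro card_mono[OF _ sub]) simp
    finally show ?thesis unfolding mm_def .
  qed
  moreover have "Ms = {B\<in>Ms. z\<in>B} \<union> {B\<in>Ms. z \<notin> B}" by auto
  then have "tt = card ({B\<in>Ms. z\<in>B} \<union> {B\<in>Ms. z \<notin> B})" unfolding tt_def by simp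
  then have "tt \<le> card {B\<in>Ms. z\<in>B} + card {B\<in>Ms. z \<notin> B}"
    using card_Un_le[of "{B\<in>Ms. z\<in>B}" "{B\<in>Ms. z \<notin> B}"] by simp
  ultimately show ?thesis using \<open>mm z + 1 \<le> c\<close> unfolding mm_def by linarith
qed

lemma emp_Ns: "{} \<in> Ns"
proof -
  have "Ms \<noteq> {}" using tt_ge c1 unfolding tt_def by auto
  then obtain B where "B \<in> Ms" by blast
  then have "P \<in> Ms" using Ms_up[of B P] Ms_eq by auto
  then show ?thesis using Ns_mem[of "{}"] by simp
qed

lemma bad_single: "x \<in> P \<Longrightarrow> bad F d x \<Longrightarrow> {x} \<in> Ns"
proof -
  assume x: "x \<in> P" "bad F d x"
  have "mm x + 1 \<le> c" using mm_ee[OF x(1)] bad_ee[OF x] by simp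
  then have lt: "mm x < tt" using tt_ge by simp
  have "\<exists>B\<in>Ms. x \<notin> B"
  proof (rule ccontr)
    assume "\<not> (\<exists>B\<in>Ms. x \<notin> B)"
    then have "{B\<in>Ms. x\<in>B} = Ms" by blast
    then have "mm x = tt" unfolding mm_def tt_def by simp
    then show False using lt by simp
  qed
  then obtain B where B: "B \<in> Ms" "x \<notin> B" by blast
  have "B \<subseteq> P" using B(1) Ms_eq by blast
  then have "B \<subseteq> P - {x}" using B(2) by blast
  then have "P - {x} \<in> Ms" using Ms_up[OF B(1)] by blast
  moreover have "P - {x} = P - {x}" ..
  moreover have "{x} \<subseteq> P" using x(1) by blast
  ultimately show ?thesis using Ns_mem[of "{x}"] by simp
qed

lemma finN: "N' \<in> Ns \<Longrightarrow> finite N'"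
proof -
  assume "N' \<in> Ns"
  then have "N' \<subseteq> P" using Ns_sub by auto
  then show ?thesis using finP finite_subset by blast
qed

lemma pow_Ns: "N' \<in> Ns \<Longrightarrow> 2^card N' \<le> tt"
proof -
  assume a: "N' \<in> Ns"
  have "Pow N' \<subseteq> Ns" using Ns_down a by auto
  then have "card (Pow N') \<le> card Ns" using card_mono[OF finNs] by simp
  then show ?thesis using card_Pow[OF finN[OF a]] card_Ns by simp
qed

lemma mm_dN: "x \<in> P \<Longrightarrow> mm x + card {N'\<in>Ns. x\<in>N'} = tt"
proof -
  assume x: "x \<in> P"
  have img: "(\<lambda>B. P - B) ` {B\<in>Ms. x\<in>B} = {N'\<in>Ns. x \<notin> N'}"
  proof
    show "(\<lambda>B. P - B) ` {B\<in>Ms. x\<in>B} \<subseteq> {N'\<in>Ns. x \<notin> N'}" unfolding Ns_alt by auto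
    show "{N'\<in>Ns. x \<notin> N'} \<subseteq> (\<lambda>B. P - B) ` {B\<in>Ms. x\<in>B}"
    proof
      fix N' assume "N' \<in> {N'\<in>Ns. x \<notin> N'}"
      then obtain B where B: "B \<in> Ms" "N' = P - B" "x \<notin> N'" unfolding Ns_alt by auto
      then have "x \<in> B" using x by auto
      then show "N' \<in> (\<lambda>B. P - B) ` {B\<in>Ms. x\<in>B}" using B by blast
    qed
  qed
  have "inj_on (\<lambda>B. P - B) {B\<in>Ms. x\<in>B}"
    using inj_compl Ms_eq by (auto intro: inj_on_subset)
  then have "mm x = card ((\<lambda>B. P - B) ` {B\<in>Ms. x\<in>B})" unfolding mm_def by (simp add: card_image)
  then have "mm x = card {N'\<in>Ns. x \<notin> N'}" by (simp only: img)
  moreover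
  { have "Ns = {N'\<in>Ns. x \<notin> N'} \<union> {N'\<in>Ns. x\<in>N'}" by auto
    then have "card Ns = card ({N'\<in>Ns. x \<notin> N'} \<union> {N'\<in>Ns. x\<in>N'})" by simp
    also have "\<dots> = card {N'\<in>Ns. x \<notin> N'} + card {N'\<in>Ns. x\<in>N'}"
      using finNs by (intro card_Un_disjoint) auto
    finally have "card Ns = card {N'\<in>Ns. x \<notin> N'} + card {N'\<in>Ns. x\<in>N'}" . }
  ultimately show ?thesis using card_Ns by simp
qed

definition "D2 x = card {N'\<in>Ns. 2 \<le> card N' \<and> x \<in> N'}"

lemma dN_le: "x \<in> P \<Longrightarrow> card {N'\<in>Ns. x\<in>N'} \<le> 1 + D2 x"
proof -
  assume x: "x \<in> P"
  have "{N'\<in>Ns. x\<in>N'} \<subseteq> insert {x} {N'\<in>Ns. 2 \<le> card N' \<and> x \<in> N'}"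
  proof
    fix N' assume a: "N' \<in> {N'\<in>Ns. x\<in>N'}"
    show "N' \<in> insert {x} {N'\<in>Ns. 2 \<le> card N' \<and> x \<in> N'}"
    proof (cases "2 \<le> card N'")
      case True then show ?thesis using a by auto
    next
      case False
      have "finite N'" using a finN by auto
      then have "card N' = 1" using False a card_gt_0_iff[of N'] by auto
      then show ?thesis using a by (auto simp: card_1_singleton_iff)
    qed
  qed
  then have "card {N'\<in>Ns. x\<in>N'} \<le> card (insert {x} {N'\<in>Ns. 2 \<le> card N' \<and> x \<in> N'})"
    using finNs by (intro card_mono) auto
  also have "\<dots> \<le> Suc (card {N'\<in>Ns. 2 \<le> card N' \<and> x \<in> N'})" using finNs by (simp add: card_insert_if)
  finally show ?thesis unfolding D2_def by simp
qed

lemma key_vertex: "x \<in> P \<Longrightarrow> tt \<le> c + ee x + D2 x"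
proof -
  assume x: "x \<in> P"
  show ?thesis using mm_ee[OF x] mm_dN[OF x] dN_le[OF x] by linarith
qed



definition "Ns2 = {N'\<in>Ns. 2 \<le> card N'}"
definition "Bad = {x\<in>P. bad F d x}"
definition "Good = {x\<in>P. good F d x}"

lemma finOut: "finite Out" using finF unfolding Out_def by simp

lemma sumD2: "(\<Sum>x\<in>P. D2 x) = (\<Sum>N'\<in>Ns2. card N')"
proof -
  have fin2: "finite Ns2" using finNs unfolding Ns2_def by simp
  have "(\<Sum>x\<in>P. D2 x) = (\<Sum>x\<in>P. card {A\<in>Ns2. x\<in>A})"
    unfolding D2_def Ns2_def by (intro sum.cong) (auto intro: arg_cong[where f=card])
  also have "\<dots> = (\<Sum>A\<in>Ns2. card (A \<inter> P))" using dcount[OF finP fin2] .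
  also have "\<dots> = (\<Sum>A\<in>Ns2. card A)"
  proof (rule sum.cong[OF refl])
    fix A assume "A \<in> Ns2"
    then have "A \<subseteq> P" using Ns_sub unfolding Ns2_def by auto
    then show "card (A \<inter> P) = card A" by (simp add: Int_absorb2)
  qed
  finally show ?thesis .
qed

lemma sumE: "(\<Sum>x\<in>P. ee x) = (\<Sum>A\<in>Out. card (A \<inter> P))"
  unfolding ee_def using dcount[OF finP finOut] .

lemma BG_card: "card Bad + card Good = d"
proof -
  have "P = Bad \<union> Good" using bad_or_good unfolding Bad_def Good_def by auto
  moreover have "Bad \<inter> Good = {}" using bad_good unfolding Bad_def Good_def by auto
  moreover have "finite Bad" "finite Good" using finP unfolding Bad_def Good_def by auto
  ultimately show ?thesis using cardP card_Un_disjoint by metis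
qed

lemma Ns2_card: "card Ns2 + 1 + card Bad \<le> tt"
proof -
  let ?Sg = "(\<lambda>x. {x}) ` Bad"
  have sub: "insert {} (?Sg \<union> Ns2) \<subseteq> Ns"
    using emp_Ns bad_single unfolding Bad_def Ns2_def by auto
  have finS: "finite ?Sg" using finP unfolding Bad_def by simp
  have fin2: "finite Ns2" using finNs unfolding Ns2_def by simp
  have cS: "card ?Sg = card Bad" by (intro card_image) (auto intro: inj_onI)
  have disj: "?Sg \<inter> Ns2 = {}" unfolding Ns2_def by auto
  have "{} \<notin> ?Sg \<union> Ns2" unfolding Ns2_def by auto
  then have "card (insert {} (?Sg \<union> Ns2)) = Suc (card (?Sg \<union> Ns2))"
    using finS fin2 by simp
  also have "card (?Sg \<union> Ns2) = card Bad + card Ns2" using card_Un_disjoint[OF finS fin2 disj] cS by simp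
  finally have "card (insert {} (?Sg \<union> Ns2)) = Suc (card Bad + card Ns2)" .
  moreover have "card (insert {} (?Sg \<union> Ns2)) \<le> card Ns" using sub finNs card_mono by blast
  ultimately show ?thesis using card_Ns by simp
qed

lemma L_ex: "\<exists>L. (\<forall>N'\<in>Ns. card N' \<le> L) \<and> 2^L \<le> tt"
proof -
  define L where "L = Max (card ` Ns)"
  have ne: "card ` Ns \<noteq> {}" using emp_Ns by auto
  have fin: "finite (card ` Ns)" using finNs by simp
  have "L \<in> card ` Ns" unfolding L_def using Max_in[OF fin ne] .
  then obtain N0 where "N0 \<in> Ns" "card N0 = L" by auto
  then have "2^L \<le> tt" using pow_Ns by auto
  moreover have "\<forall>N'\<in>Ns. card N' \<le> L" unfolding L_def using fin by auto
  ultimately show ?thesis by blast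
qed

lemma h_nonneg: "0 \<le> real (card (A \<inter> P)) / real (card A)" by simp

lemma Out_big: "A \<in> Out \<Longrightarrow> 2 \<le> card A \<and> 2^(card A - 2) \<le> real (card A) * SS"
proof -
  assume A: "A \<in> Out"
  then obtain x y where xy: "x \<in> A" "x \<in> P" "y \<in> A" "y \<notin> P" unfolding Out_def by auto
  have AF: "A \<in> F" using A unfolding Out_def by simp
  have finA': "finite A" using finA[OF AF] .
  have xny: "x \<noteq> y" using xy by auto
  have cA: "card (A - {x,y}) = card A - 2" using xy xny finA' by (simp add: card_Diff_subset)
  have c2: "2 \<le> card A"
  proof -
    have "{x,y} \<subseteq> A" using xy by auto
    then have "card {x,y} \<le> card A" using finA' card_mono by blast
    then show ?thesis using xny by simp
  qed
  define Q where "Q = (\<lambda>C. insert x (insert y C)) ` Pow (A - {x,y})"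
  have inj: "inj_on (\<lambda>C. insert x (insert y C)) (Pow (A - {x,y}))"
  proof (rule inj_onI)
    fix C D assume "C \<in> Pow (A - {x,y})" "D \<in> Pow (A - {x,y})" "insert x (insert y C) = insert x (insert y D)"
    then have "insert x (insert y C) - {x,y} = insert x (insert y D) - {x,y}" by simp
    moreover have "insert x (insert y C) - {x,y} = C" "insert x (insert y D) - {x,y} = D"
      using \<open>C \<in> Pow (A - {x,y})\<close> \<open>D \<in> Pow (A - {x,y})\<close> by auto
    ultimately show "C = D" by simp
  qed
  have cQ: "card Q = 2^(card A - 2)"
    unfolding Q_def using card_image[OF inj] cA finA' by (simp add: card_Pow)
  have QO: "Q \<subseteq> Out"
  proof
    fix B assume "B \<in> Q"
    then obtain C where C: "C \<subseteq> A - {x,y}" "B = insert x (insert y C)" unfolding Q_def by auto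
    then have "B \<subseteq> A" using xy by auto
    then have "B \<in> F" using her_sub AF by blast
    then show "B \<in> Out" unfolding Out_def using C xy by auto
  qed
  have finQ: "finite Q" unfolding Q_def using finA' by simp
  have "(\<Sum>B\<in>Q. 1 / real (card A)) \<le> (\<Sum>B\<in>Q. real (card (B \<inter> P)) / real (card B))"
  proof (rule sum_mono)
    fix B assume "B \<in> Q"
    then obtain C where C: "C \<subseteq> A - {x,y}" "B = insert x (insert y C)" unfolding Q_def by auto
    then have BA: "B \<subseteq> A" using xy by auto
    have finB: "finite B" using BA finA' finite_subset by blast
    have "x \<in> B \<inter> P" using C xy by auto
    then have "B \<inter> P \<noteq> {}" by blast
    moreover have "finite (B \<inter> P)" using finB by simp
    ultimately have "card (B \<inter> P) \<noteq> 0" by simp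
    then have "1 \<le> card (B \<inter> P)" by simp
    moreover have "card B \<le> card A" using BA finA' card_mono by blast
    moreover have "B \<noteq> {}" using C by auto
    then have "0 < card B" using finB by (simp add: card_gt_0_iff)
    ultimately show "1 / real (card A) \<le> real (card (B \<inter> P)) / real (card B)"
      by (simp add: frac_le)
  qed
  also have "\<dots> \<le> SS" unfolding SS_def using QO finOut by (intro sum_mono2) auto
  finally have "real (card Q) / real (card A) \<le> SS" by simp
  then have "real (card Q) \<le> real (card A) * SS" using c2 by (simp add: divide_le_eq mult.commute)
  then show ?thesis using cQ c2 by simp
qed

lemma K_ex: "\<exists>K. (\<forall>A\<in>Out. card A \<le> K) \<and> (K = 0 \<or> (2 \<le> K \<and> 2^(K-2) \<le> real K * SS))"
proof (cases "Out = {}")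
  case True then show ?thesis by auto
next
  case False
  define K where "K = Max (card ` Out)"
  have ne: "card ` Out \<noteq> {}" using False by auto
  have fin: "finite (card ` Out)" using finOut by simp
  have "K \<in> card ` Out" unfolding K_def using Max_in[OF fin ne] .
  then obtain A0 where "A0 \<in> Out" "card A0 = K" by auto
  then have "2 \<le> K \<and> 2^(K-2) \<le> real K * SS" using Out_big by auto
  moreover have "\<forall>A\<in>Out. card A \<le> K" unfolding K_def using fin by auto
  ultimately show ?thesis by blast
qed

lemma E_le: "\<forall>A\<in>Out. card A \<le> K \<Longrightarrow> real (\<Sum>A\<in>Out. card (A \<inter> P)) \<le> real K * SS"
proof -
  assume K: "\<forall>A\<in>Out. card A \<le> K"
  have "real (\<Sum>A\<in>Out. card (A \<inter> P)) = (\<Sum>A\<in>Out. real (card (A \<inter> P)))" by simp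
  also have "\<dots> \<le> (\<Sum>A\<in>Out. real K * (real (card (A \<inter> P)) / real (card A)))"
  proof (rule sum_mono)
    fix A assume A: "A \<in> Out"
    then have "2 \<le> card A" using Out_big by auto
    then have pos: "0 < real (card A)" by simp
    have "real (card A) \<le> real K" using K A by simp
    then have "real (card A) * real (card (A \<inter> P)) \<le> real K * real (card (A \<inter> P))"
      by (rule mult_right_mono) simp
    then have "real (card (A \<inter> P)) * real (card A) \<le> real K * real (card (A \<inter> P))"
      by (simp add: mult.commute)
    then show "real (card (A \<inter> P)) \<le> real K * (real (card (A \<inter> P)) / real (card A))"
      using pos by (simp add: le_divide_eq mult.commute)
  qed
  also have "\<dots> = real K * SS" unfolding SS_def by (simp add: sum_distrib_left)
  finally show ?thesis .
qed

lemma Good_le: "real (card Good) \<le> 2 * SS"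
proof -
  have "\<forall>x\<in>Good. \<exists>y. y \<notin> P \<and> {x,y} \<in> F" using good_pair unfolding Good_def by auto
  then obtain f where f: "\<forall>x\<in>Good. f x \<notin> P \<and> {x, f x} \<in> F" by (auto dest!: bchoice)
  have GP: "Good \<subseteq> P" unfolding Good_def by auto
  define Q where "Q = (\<lambda>x. {x, f x}) ` Good"
  have inj: "inj_on (\<lambda>x. {x, f x}) Good"
  proof (rule inj_onI)
    fix x x' assume a: "x \<in> Good" "x' \<in> Good" "{x, f x} = {x', f x'}"
    then have "x \<in> P" "x' \<in> P" "f x \<notin> P" "f x' \<notin> P" using f GP by auto
    moreover have "x \<in> {x', f x'}" using a(3) by blast
    ultimately show "x = x'" by auto
  qed
  have QO: "Q \<subseteq> Out" unfolding Q_def Out_def using f GP by auto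
  have val: "real (card (B \<inter> P)) / real (card B) = 1/2" if "B \<in> Q" for B
  proof -
    obtain x where x: "x \<in> Good" "B = {x, f x}" using \<open>B \<in> Q\<close> unfolding Q_def by auto
    then have "x \<in> P" "f x \<notin> P" using f GP by auto
    then have "x \<noteq> f x" by auto
    then have "B \<inter> P = {x}" "card B = 2" using x \<open>x \<in> P\<close> \<open>f x \<notin> P\<close> by auto
    then show ?thesis by simp
  qed
  have cQ: "card Q = card Good" unfolding Q_def using card_image[OF inj] .
  have "(\<Sum>B\<in>Q. real (card (B \<inter> P)) / real (card B)) = (\<Sum>B\<in>Q. 1/2)"
    by (rule sum.cong[OF refl]) (rule val)
  then have "real (card Good) / 2 = (\<Sum>B\<in>Q. real (card (B \<inter> P)) / real (card B))"
    using cQ by simp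
  also have "\<dots> \<le> SS" unfolding SS_def using QO finOut by (intro sum_mono2) auto
  finally show ?thesis by simp
qed

lemma final: "card Good \<le> 7 \<and> tt \<le> d + 4 \<and> (\<forall>N'\<in>Ns. card N' \<le> 3)"
proof -
  obtain L where L: "\<forall>N'\<in>Ns. card N' \<le> L" "2^L \<le> tt" using L_ex by blast
  obtain K where K: "\<forall>A\<in>Out. card A \<le> K" "K = 0 \<or> (2 \<le> K \<and> 2^(K-2) \<le> real K * SS)"
    using K_ex by blast
  have tc: "c \<le> tt" by (rule tt_ge)
  define v where "v = tt - c"
  have tv: "tt = v + c" using tc v_def by simp
  have t2: "tt + 2 \<le> 2*c" by (rule tt_le)
  have SSv: "SS < real v + 1" using SS_bound tv by simp
  have "tt < 2*d" using t2 cd by linarith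
  then have L6: "6*L \<le> d" using numL[OF d50 L(2)] by blast
  have vc: "v + 2 \<le> c" using t2 tv by linarith
  have K4: "4*K \<le> d"
  proof (cases "K = 0")
    case True then show ?thesis by simp
  next
    case False
    then have K2: "2 \<le> K" and KS: "2^(K-2) \<le> real K * SS" using K(2) by auto
    have "real K * SS < real K * (real v + 1)" using SSv K2 by (intro mult_strict_left_mono) auto
    also have "\<dots> \<le> real K * real d" using vc cd K2 by (intro mult_left_mono) auto
    finally have "real (2^(K-2)) < real (K*d)" using KS by simp
    then have "2^(K-2) < K*d" by (simp only: of_nat_less_iff)
    then show ?thesis using numK[OF d50 K2] by blast
  qed
  have gle: "card Good \<le> 2* v + 1"
  proof -
    have "real (card Good) < 2 * real v + 2" using Good_le SSv by linarith
    then have "real (card Good) < real (2* v + 2)" by simp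
    then have "card Good < 2* v+2" by (simp only: of_nat_less_iff)
    then show ?thesis by simp
  qed
  have keysum: "d * v \<le> (\<Sum>x\<in>P. ee x) + (\<Sum>x\<in>P. D2 x)"
  proof -
    have "(\<Sum>x\<in>P. v) \<le> (\<Sum>x\<in>P. ee x + D2 x)"
    proof (rule sum_mono)
      fix x assume "x \<in> P"
      then show "v \<le> ee x + D2 x" using key_vertex tv by fastforce
    qed
    then show ?thesis using cardP by (simp add: sum.distrib mult.commute)
  qed
  have D2sum: "(\<Sum>x\<in>P. D2 x) \<le> card Ns2 * L"
  proof -
    have "(\<Sum>N'\<in>Ns2. card N') \<le> (\<Sum>N'\<in>Ns2. L)"
      using L(1) unfolding Ns2_def by (intro sum_mono) auto
    then have "(\<Sum>N'\<in>Ns2. card N') \<le> card Ns2 * L" by simp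
    then show ?thesis using sumD2 by simp
  qed
  have N2c: "card Ns2 + 1 + d \<le> tt + card Good" using Ns2_card BG_card by linarith
  have Ereal: "real (\<Sum>x\<in>P. ee x) \<le> real K * SS" using sumE E_le[OF K(1)] by simp
  show ?thesis
  proof (cases "v = 0")
    case True
    then have g1: "card Good \<le> 1" using gle by simp
    have "tt = c" using True tv by simp
    then have "card Ns2 = 0" using N2c g1 cd by linarith
    then have "Ns2 = {}" using finNs unfolding Ns2_def by simp
    then have "\<forall>N'\<in>Ns. card N' \<le> 3" unfolding Ns2_def by auto
    then show ?thesis using g1 \<open>tt = c\<close> cd by simp
  next
    case False
    then have v1: "1 \<le> v" by simp
    have "card Ns2 \<le> 3* v" using N2c gle tv cd by linarith
    then have "card Ns2 * L \<le> 3* v *L" by simp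
    then have f1: "d * v \<le> (\<Sum>x\<in>P. ee x) + 3* v *L" using keysum D2sum by linarith
    then have f1r: "real d * real v \<le> real (\<Sum>x\<in>P. ee x) + 3 * (real v * real L)"
    proof -
      have "real (d * v) \<le> real ((\<Sum>x\<in>P. ee x) + 3* v *L)" using f1 by (simp only: of_nat_le_iff)
      then show ?thesis by (simp add: algebra_simps)
    qed
    have f2: "6 * (real v * real L) \<le> real d * real v"
    proof -
      have "(6*L)* v \<le> d* v" using L6 by (rule mult_right_mono) simp
      then have "real ((6*L)* v) \<le> real (d* v)" by (simp only: of_nat_le_iff)
      then show ?thesis by (simp add: algebra_simps)
    qed
    have f4: "4 * (real K * real v) \<le> real d * real v"
    proof -
      have "(4*K)* v \<le> d* v" using K4 by (rule mult_right_mono) simp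
      then have "real ((4*K)* v) \<le> real (d* v)" by (simp only: of_nat_le_iff)
      then show ?thesis by (simp add: algebra_simps)
    qed
    have dv: "0 < real d * real v" using d50 v1 by simp
    show ?thesis
    proof (cases "K = 0")
      case True
      then have "real (\<Sum>x\<in>P. ee x) \<le> 0" using Ereal by simp
      then show ?thesis using f1r f2 dv by linarith
    next
      case False
      have "real K * SS < real K * (real v + 1)" using SSv False by (intro mult_strict_left_mono) auto
      also have "\<dots> \<le> 2 * (real K * real v)"
      proof -
        have "real K * 1 \<le> real K * real v" using v1 by (intro mult_left_mono) auto
        then show ?thesis by (simp add: algebra_simps)
      qed
      finally have "real K * SS < 2 * (real K * real v)" .
      then show ?thesis using f1r f2 f4 Ereal dv by linarith
    qed
  qed
qed

end

theorem mainTheorem15: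
  fixes n d c :: nat and F :: "nat set set" and P :: "nat set"
  assumes "d \<ge> 50"
    and "1 \<le> c" and "c \<le> d"
    and "F \<subseteq> Pow {1..n}"
    and "hereditary F"
    and "int (min_deg n F) \<ge> 2 ^ (d - 1) - int c + 1"
    and "isolated_pile n F d P"
    and "(\<Sum>x\<in>P. weight F x) < 2 ^ d - real c"
  shows "card {x\<in>P. good F d x} \<le> 7
       \<and> pile_t F d P \<le> d + 4
       \<and> (\<forall>N\<in>pileN F P. card N \<le> 3)
       \<and> (\<forall>x\<in>P. bad F d x \<longrightarrow> {x} \<in> pileN F P)"
proof -
  have pl: "is_pile n F d P" using assms(7) unfolding isolated_pile_def by simp
  interpret PL n d c F P using assms pl by unfold_locales auto
  show ?thesis using final bad_single pile_t_eq unfolding Good_def Ns_def by auto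
qed

end
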